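(* Let $f\in\mathcal{R}$ be a real rational function all of whose poles are roots of unity, and let $L$ be the level of $f$. Then $f$ is a finite real linear combination of the functions \[\Big(x\frac{d}{dx}\Big)^k\Big(\frac{x^j}{1-x^L}\Big),\qquad k\in\mathbb{N}=\{0,1,2,\dots\},\ 0\le j<L,\] and each of these functions is an eigenfunction of $U_{L+1}$ and has level $L$.
   Context: $\mathcal{R}$ denotes the real vector space of rational functions $f(x)=A(x)/B(x)$ with $A,B\in\mathbb{R}[x]$, $B(0)\neq 0$ and $\deg A<\deg B$. For a rational function $f$ with Taylor expansion $f(x)=\sum_{n\ge0}a_nx^n$ at $0$ and a positive integer $p$, $U_pf(x)=\sum_{n\ge 0}a_{pn}x^n$. If all poles of $f$ are roots of unity, the level of $f$ is the least common multiple of the orders of these roots of unity. *)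

theory Defs
  imports "HOL-Computational_Algebra.Computational_Algebra"
begin

text \<open>A real rational function A/B is represented by the pair of real polynomials (A, B);
  membership in the space R: B(0) nonzero and deg A < deg B.\<close>
definition in_R :: "real poly \<Rightarrow> real poly \<Rightarrow> bool" where
  "in_R A B \<longleftrightarrow> poly B 0 \<noteq> 0 \<and> degree A < degree B"

definition rat_fps :: "real poly \<Rightarrow> real poly \<Rightarrow> real fps" where
  "rat_fps A B = fps_of_poly A / fps_of_poly B"

text \<open>Complex poles of A/B: zeros z of B whose multiplicity exceeds that in A
  (independent of the chosen representation; the zero function has no poles).\<close>
definition poles :: "real poly \<Rightarrow> real poly \<Rightarrow> complex set" where
  "poles A B = {z. A \<noteq> 0 \<and> poly (map_poly complex_of_real B) z = 0 \<and>
       order z (map_poly complex_of_real A) < order z (map_poly complex_of_real B)}"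

definition root_of_unity :: "complex \<Rightarrow> bool" where
  "root_of_unity z \<longleftrightarrow> (\<exists>n>0. z ^ n = 1)"

definition unity_order :: "complex \<Rightarrow> nat" where
  "unity_order z = (LEAST n. n > 0 \<and> z ^ n = 1)"

definition level :: "real poly \<Rightarrow> real poly \<Rightarrow> nat" where
  "level A B = Lcm (unity_order ` poles A B)"

definition U_op :: "nat \<Rightarrow> real fps \<Rightarrow> real fps" where
  "U_op p F = Abs_fps (\<lambda>n. F $ (p * n))"

definition theta :: "real fps \<Rightarrow> real fps" where
  "theta F = fps_X * fps_deriv F"

definition basis_fn :: "nat \<Rightarrow> nat \<Rightarrow> nat \<Rightarrow> real fps" where
  "basis_fn L k j = (theta ^^ k) (fps_X ^ j / (1 - fps_X ^ L))"

end

theory Submission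
  imports Defs "HOL-Computational_Algebra.Fundamental_Theorem_Algebra"
begin


lemma theta_nth: "theta F $ n = of_nat n * F $ n"
  by (cases n) (simp_all add: theta_def)

lemma theta_add: "theta (F + G) = theta F + theta G"
  by (simp add: theta_def algebra_simps)
lemma theta_diff: "theta (F - G) = theta F - theta G"
  by (simp add: theta_def algebra_simps)
lemma theta_const: "theta (fps_const c * F) = fps_const c * theta F"
  by (simp add: theta_def algebra_simps)
lemma theta_sum: "theta (\<Sum>i\<in>S. f i) = (\<Sum>i\<in>S. theta (f i))"
  by (induction S rule: infinite_finite_induct) (simp_all add: theta_def distrib_left)
lemma theta_mult: "theta (F * G) = theta F * G + F * theta G"
  by (simp add: theta_def algebra_simps)
lemma theta_power: "theta (F ^ m) = fps_const (of_nat m) * theta F * F ^ (m - 1)"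
  by (simp add: theta_def fps_deriv_power algebra_simps)
lemma theta_Xpow: "theta (fps_X ^ a :: real fps) = fps_const (of_nat a) * fps_X ^ a"
  by (rule fps_ext) (simp add: theta_nth fps_X_power_nth)

lemma basis_coeff0:
  assumes "j < L"
  shows "(fps_X ^ j / (1 - fps_X ^ L) :: real fps) $ n = (if n mod L = j then 1 else 0)"
proof -
  define G :: "real fps" where "G = Abs_fps (\<lambda>n. if n mod L = j then 1 else 0)"
  have L0: "L > 0" using assms by simp
  have "G * (1 - fps_X ^ L) = fps_X ^ j"
  proof (rule fps_ext)
    fix n
    have "(G * (1 - fps_X ^ L)) $ n = G $ n - (fps_X ^ L * G) $ n"
      by (simp add: algebra_simps)
    also have "\<dots> = (fps_X ^ j :: real fps) $ n"
      using assms L0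
    proof (cases "n < L")
      case True
      then show ?thesis by (auto simp: fps_X_power_nth fps_X_power_mult_nth G_def)
    next
      case False
      then have "n mod L = (n - L) mod L" by (simp add: le_mod_geq)
      moreover have "n \<noteq> j" using False assms by simp
      ultimately show ?thesis using False by (simp add: fps_X_power_nth fps_X_power_mult_nth G_def)
    qed
    finally show "(G * (1 - fps_X ^ L)) $ n = (fps_X ^ j :: real fps) $ n" .
  qed
  moreover have u: "(1 - fps_X ^ L :: real fps) $ 0 = 1" using L0 by simp
  ultimately have "fps_X ^ j / (1 - fps_X ^ L) = G * (1 - fps_X ^ L) * inverse (1 - fps_X ^ L :: real fps)"
    by (simp add: fps_divide_unit)
  also have "\<dots> = G" using u by (simp add: mult.assoc inverse_mult_eq_1')
  finally show ?thesis by (simp add: G_def)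
qed

lemma basis_coeff:
  assumes "j < L"
  shows "basis_fn L k j $ n = (if n mod L = j then real n ^ k else 0)"
  unfolding basis_fn_def
  by (induction k) (simp_all add: basis_coeff0[OF assms] theta_nth)



definition qp :: "nat \<Rightarrow> real fps \<Rightarrow> bool" where
  "qp N F \<longleftrightarrow> (\<exists>K (c :: nat \<Rightarrow> nat \<Rightarrow> real).
      F = (\<Sum>k<K. \<Sum>j<N. fps_const (c k j) * basis_fn N k j))"

lemma qp_extend:
  assumes "F = (\<Sum>k<K. \<Sum>j<N. fps_const (c k j) * basis_fn N k j)" "K \<le> K'"
  shows "F = (\<Sum>k<K'. \<Sum>j<N. fps_const (if k < K then c k j else 0) * basis_fn N k j)"
proof -
  have "(\<Sum>k<K'. \<Sum>j<N. fps_const (if k < K then c k j else 0) * basis_fn N k j)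
      = (\<Sum>k<K. \<Sum>j<N. fps_const (if k < K then c k j else 0) * basis_fn N k j)"
    using assms(2) by (intro sum.mono_neutral_right) auto
  also have "\<dots> = F" using assms(1) by simp
  finally show ?thesis by simp
qed

lemma qp_zero: "qp N 0"
  unfolding qp_def by (rule exI[of _ 0]) simp

lemma qp_add:
  assumes "qp N F" "qp N G" shows "qp N (F + G)"
proof -
  obtain K1 c1 where 1: "F = (\<Sum>k<K1. \<Sum>j<N. fps_const (c1 k j) * basis_fn N k j)"
    using assms(1) unfolding qp_def by blast
  obtain K2 c2 where 2: "G = (\<Sum>k<K2. \<Sum>j<N. fps_const (c2 k j) * basis_fn N k j)"
    using assms(2) unfolding qp_def by blast
  define K where "K = K1 + K2"
  have e1: "F = (\<Sum>k<K. \<Sum>j<N. fps_const (if k < K1 then c1 k j else 0) * basis_fn N k j)"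
    by (rule qp_extend[OF 1]) (simp add: K_def)
  have e2: "G = (\<Sum>k<K. \<Sum>j<N. fps_const (if k < K2 then c2 k j else 0) * basis_fn N k j)"
    by (rule qp_extend[OF 2]) (simp add: K_def)
  have "F + G = (\<Sum>k<K. \<Sum>j<N. fps_const ((if k < K1 then c1 k j else 0) + (if k < K2 then c2 k j else 0)) * basis_fn N k j)"
  proof -
    have "F + G = (\<Sum>k<K. (\<Sum>j<N. fps_const (if k < K1 then c1 k j else 0) * basis_fn N k j)
        + (\<Sum>j<N. fps_const (if k < K2 then c2 k j else 0) * basis_fn N k j))"
      unfolding e1 e2 by (rule sum.distrib[symmetric])
    also have "\<dots> = (\<Sum>k<K. \<Sum>j<N. fps_const (if k < K1 then c1 k j else 0) * basis_fn N k j
        + fps_const (if k < K2 then c2 k j else 0) * basis_fn N k j)"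
      by (simp only: sum.distrib)
    also have "\<dots> = (\<Sum>k<K. \<Sum>j<N. fps_const ((if k < K1 then c1 k j else 0) + (if k < K2 then c2 k j else 0)) * basis_fn N k j)"
      by (simp only: fps_const_add[symmetric] distrib_right)
    finally show ?thesis .
  qed
  then show ?thesis unfolding qp_def
    by (intro exI[of _ K] exI[of _ "\<lambda>k j. (if k < K1 then c1 k j else 0) + (if k < K2 then c2 k j else 0)"])
qed

lemma qp_const:
  assumes "qp N F" shows "qp N (fps_const r * F)"
proof -
  obtain K c where 1: "F = (\<Sum>k<K. \<Sum>j<N. fps_const (c k j) * basis_fn N k j)"
    using assms(1) unfolding qp_def by blast
  have "fps_const r * F = (\<Sum>k<K. \<Sum>j<N. fps_const (r * c k j) * basis_fn N k j)"
    unfolding 1 by (simp only: sum_distrib_left mult.assoc[symmetric] fps_const_mult)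
  then show ?thesis unfolding qp_def by (intro exI[of _ K] exI[of _ "\<lambda>k j. r * c k j"])
qed

lemma qp_diff:
  assumes "qp N F" "qp N G" shows "qp N (F - G)"
proof -
  have "F - G = F + fps_const (-1) * G" by (simp flip: fps_const_neg)
  then show ?thesis using qp_add[OF assms(1) qp_const[OF assms(2), of "-1"]] by metis
qed

lemma qp_sum: "(\<And>i. i \<in> S \<Longrightarrow> qp N (f i)) \<Longrightarrow> qp N (\<Sum>i\<in>S. f i)"
  by (induction S rule: infinite_finite_induct) (auto intro: qp_add qp_zero)

lemma theta_basis: "theta (basis_fn N k j) = basis_fn N (Suc k) j"
  by (simp add: basis_fn_def)

lemma qp_theta:
  assumes "qp N F" shows "qp N (theta F)"
proof -
  obtain K c where 1: "F = (\<Sum>k<K. \<Sum>j<N. fps_const (c k j) * basis_fn N k j)"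
    using assms(1) unfolding qp_def by blast
  define c' where "c' = (\<lambda>k j. if k = 0 then 0 else c (k - 1) j)"
  have "theta F = (\<Sum>k<K. \<Sum>j<N. fps_const (c k j) * basis_fn N (Suc k) j)"
    unfolding 1 by (simp add: theta_sum theta_const theta_basis)
  also have "\<dots> = (\<Sum>k<Suc K. \<Sum>j<N. fps_const (c' k j) * basis_fn N k j)"
    by (subst sum.lessThan_Suc_shift) (simp add: c'_def)
  finally show ?thesis unfolding qp_def by (intro exI[of _ "Suc K"] exI[of _ c'])
qed

lemma qp_basis:
  assumes "j < N" shows "qp N (basis_fn N k j)"
proof -
  define c where "c = (\<lambda>k' j'. if k' = k \<and> j' = j then 1 else (0::real))"
  have "(\<Sum>k'<Suc k. \<Sum>j'<N. fps_const (c k' j') * basis_fn N k' j')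
      = (\<Sum>k'<Suc k. if k' = k then basis_fn N k j else 0)"
  proof (intro sum.cong refl)
    fix k' assume "k' \<in> {..<Suc k}"
    have "(\<Sum>j'<N. fps_const (c k' j') * basis_fn N k' j')
        = (\<Sum>j'<N. if j' = j then (if k' = k then basis_fn N k j else 0) else 0)"
      by (intro sum.cong refl) (auto simp: c_def)
    also have "\<dots> = (if k' = k then basis_fn N k j else 0)"
      using assms by (subst sum.delta) auto
    finally show "(\<Sum>j'<N. fps_const (c k' j') * basis_fn N k' j') = (if k' = k then basis_fn N k j else 0)" .
  qed
  also have "\<dots> = basis_fn N k j" by (subst sum.delta) auto
  finally have "basis_fn N k j = (\<Sum>k'<Suc k. \<Sum>j'<N. fps_const (c k' j') * basis_fn N k' j')" by (rule sym)
  then show ?thesis unfolding qp_def by (intro exI[of _ "Suc k"] exI[of _ c])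
qed



definition Ifps :: "nat \<Rightarrow> real fps" where "Ifps N = inverse (1 - fps_X ^ N)"

lemma D0: "N > 0 \<Longrightarrow> (1 - fps_X ^ N :: real fps) $ 0 = 1" by simp

lemma Ifps_mult: "N > 0 \<Longrightarrow> (1 - fps_X ^ N) * Ifps N = 1"
  unfolding Ifps_def by (rule inverse_mult_eq_1') simp

lemma XX: "N > 0 \<Longrightarrow> fps_X * fps_X ^ (N - 1) = (fps_X ^ N :: real fps)"
  by (cases N) simp_all

lemma theta_Ifps:
  assumes "N > 0"
  shows "theta (Ifps N) = fps_const (real N) * fps_X ^ N * Ifps N ^ 2"
proof -
  have "theta (Ifps N) = fps_X * (- fps_deriv (1 - fps_X ^ N) * (Ifps N)\<^sup>2)"
    unfolding theta_def Ifps_def using assms by (subst fps_inverse_deriv) simp_all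
  also have "\<dots> = fps_const (real N) * (fps_X * fps_X ^ (N - 1)) * Ifps N ^ 2"
    by (simp add: fps_deriv_power algebra_simps)
  also have "\<dots> = fps_const (real N) * fps_X ^ N * Ifps N ^ 2"
    using XX[OF assms] by simp
  finally show ?thesis .
qed

lemma theta_Ipow:
  assumes "N > 0"
  shows "theta (Ifps N ^ M) = fps_const (real M * real N) * fps_X ^ N * Ifps N ^ (M + 1)"
proof (cases M)
  case 0 then show ?thesis by (simp add: theta_def)
next
  case (Suc m)
  have "theta (Ifps N ^ M) = fps_const (real M) * theta (Ifps N) * Ifps N ^ (M - 1)"
    by (rule theta_power)
  also have "\<dots> = fps_const (real M) * (fps_const (real N) * fps_X ^ N * Ifps N ^ 2) * Ifps N ^ (M - 1)"
    by (simp only: theta_Ifps[OF assms])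
  also have "\<dots> = fps_const (real M * real N) * fps_X ^ N * (Ifps N ^ 2 * Ifps N ^ (M - 1))"
    by (simp only: fps_const_mult[symmetric] mult_ac)
  also have "Ifps N ^ 2 * Ifps N ^ (M - 1) = Ifps N ^ (M + 1)"
    using Suc by (simp only: power_add[symmetric]) simp
  finally show ?thesis .
qed

lemma aux_split:
  assumes h: "x = y - z * y" shows "(w::'a::comm_ring) * y = w * x + (w * z) * y"
proof -
  have "w * x + (w * z) * y = w * (y - z * y) + (w * z) * y" using h by simp
  also have "\<dots> = w * y" by (simp add: algebra_simps)
  finally show ?thesis by simp
qed

lemma const_cancel: "x \<noteq> 0 \<Longrightarrow> fps_const (1 / x) * (fps_const x * Z) = (Z :: real fps)"
  by (simp add: mult.assoc[symmetric])

lemma theta_XI: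
  assumes "N > 0"
  shows "theta (fps_X ^ a * Ifps N ^ M) = fps_const (real a) * (fps_X ^ a * Ifps N ^ M)
     + fps_const (real M * real N) * (fps_X ^ (a + N) * Ifps N ^ (M + 1))"
  by (simp add: theta_mult theta_Xpow theta_Ipow[OF assms] power_add algebra_simps)

lemma I_split:
  assumes "N > 0"
  shows "fps_X ^ a * Ifps N ^ (M + 1) = fps_X ^ a * Ifps N ^ M + fps_X ^ (a + N) * Ifps N ^ (M + 1)"
proof -
  have "Ifps N ^ M = Ifps N ^ M * ((1 - fps_X ^ N) * Ifps N)" using Ifps_mult[OF assms] by simp
  also have "\<dots> = Ifps N ^ (M + 1) - fps_X ^ N * Ifps N ^ (M + 1)"
    by (simp add: algebra_simps)
  finally have h: "Ifps N ^ M = Ifps N ^ (M + 1) - fps_X ^ N * Ifps N ^ (M + 1)" .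
  show ?thesis using aux_split[OF h, of "fps_X ^ a"] by (simp only: power_add)
qed

lemma base_XI:
  assumes "j < N"
  shows "fps_X ^ j * Ifps N = basis_fn N 0 j"
  using assms unfolding basis_fn_def Ifps_def by (simp add: fps_divide_unit)

lemma qp_XI:
  assumes "N > 0"
  shows "M \<ge> 1 \<Longrightarrow> a < N * M \<Longrightarrow> qp N (fps_X ^ a * Ifps N ^ M)"
proof (induction M arbitrary: a rule: nat_induct_at_least)
  case base
  then show ?case using base_XI[of a N] qp_basis[of a N 0] by simp
next
  case (Suc M)
  have big: "qp N (fps_X ^ b * Ifps N ^ (M + 1))" if "N \<le> b" "b < N * Suc M" for b
  proof -
    obtain a' where b: "b = a' + N" using \<open>N \<le> b\<close> by (metis le_add_diff_inverse2)
    have a': "a' < N * M" using b that by simp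
    have q1: "qp N (fps_X ^ a' * Ifps N ^ M)" by (rule Suc.IH[OF a'])
    have Mpos: "real M * real N \<noteq> 0" using Suc.hyps assms by simp
    have d: "theta (fps_X ^ a' * Ifps N ^ M) - fps_const (real a') * (fps_X ^ a' * Ifps N ^ M)
        = fps_const (real M * real N) * (fps_X ^ b * Ifps N ^ (M + 1))"
      unfolding theta_XI[OF assms] b by (rule add_diff_cancel_left')
    have "fps_X ^ b * Ifps N ^ (M + 1) = fps_const (1 / (real M * real N)) *
       (theta (fps_X ^ a' * Ifps N ^ M) - fps_const (real a') * (fps_X ^ a' * Ifps N ^ M))"
      unfolding d using Mpos by (rule const_cancel[symmetric])
    then show ?thesis by (simp add: qp_const qp_diff qp_theta q1)
  qed
  show ?case
  proof (cases "N \<le> a")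
    case True then show ?thesis using big Suc.prems by simp
  next
    case False
    then have "a < N * M" using Suc.hyps by (simp add: less_le_trans[of a N "N * M"])
    then have q1: "qp N (fps_X ^ a * Ifps N ^ M)" by (rule Suc.IH)
    have q2: "qp N (fps_X ^ (a + N) * Ifps N ^ (M + 1))"
      using False Suc.hyps by (intro big) (auto simp: less_le_trans[of a N "N * M"])
    show ?thesis using I_split[OF assms, of a M] qp_add[OF q1 q2] by simp
  qed
qed

lemma qp_poly:
  assumes "N > 0" "M \<ge> 1" "P = 0 \<or> degree P < N * M"
  shows "qp N (fps_of_poly P * Ifps N ^ M)"
proof -
  have "fps_of_poly P = (\<Sum>i\<le>degree P. fps_const (coeff P i) * fps_X ^ i)"
    by (subst (1) poly_as_sum_of_monoms[symmetric]) (simp add: fps_of_poly_sum fps_of_poly_monom)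
  then have "fps_of_poly P * Ifps N ^ M = (\<Sum>i\<le>degree P. fps_const (coeff P i) * (fps_X ^ i * Ifps N ^ M))"
    by (simp add: sum_distrib_right mult.assoc)
  moreover have "qp N (\<Sum>i\<le>degree P. fps_const (coeff P i) * (fps_X ^ i * Ifps N ^ M))"
  proof (intro qp_sum qp_const qp_XI[OF assms(1,2)])
    fix i assume "i \<in> {..degree P}"
    then show "i < N * M" using assms by (cases "P = 0") (auto simp: less_le_trans[of 0 N "N * M"])
  qed
  ultimately show ?thesis by simp
qed



abbreviation cr :: "real poly \<Rightarrow> complex poly" where "cr \<equiv> map_poly complex_of_real"

lemma cr_mult: "cr (p * q) = cr p * cr q"
  by (rule poly_eqI) (simp add: coeff_map_poly coeff_mult of_real_sum)
lemma cr_add: "cr (p + q) = cr p + cr q"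
  by (rule poly_eqI) (simp add: coeff_map_poly)
lemma cr_diff: "cr (p - q) = cr p - cr q"
  by (rule poly_eqI) (simp add: coeff_map_poly)
lemma cr_1: "cr 1 = 1" by simp
lemma cr_power: "cr (p ^ n) = cr p ^ n"
  by (induction n) (simp_all add: cr_mult)
lemma cr_monom: "cr (monom c n) = monom (of_real c) n"
  by (simp add: map_poly_monom)
lemma cr_eq_0: "cr p = 0 \<longleftrightarrow> p = 0"
  by (rule map_poly_eq_0_iff) auto
lemma cr_degree: "degree (cr p) = degree p"
  by (rule degree_map_poly) auto

lemma order_le_dvd:
  fixes p q :: "complex poly"
  assumes "p \<noteq> 0" "q \<noteq> 0" "\<forall>z. order z p \<le> order z q"
  shows "p dvd q"
  using assms
proof (induction "degree p" arbitrary: p q rule: less_induct)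
  case less
  show ?case
  proof (cases "degree p = 0")
    case True
    then have "is_unit p" using less.prems by (simp add: is_unit_iff_degree)
    then show ?thesis by (rule unit_imp_dvd)
  next
    case False
    then have "\<not> constant (poly p)" by (simp add: constant_degree)
    then obtain z where z: "poly p z = 0" using fundamental_theorem_of_algebra by blast
    then have "order z p \<noteq> 0" using less.prems by (simp add: order_root)
    then have "order z q \<noteq> 0" using less.prems(3) by (metis le_zero_eq)
    then have "poly q z = 0" by (simp add: order_root)
    from z obtain p' where p': "p = [:-z, 1:] * p'" by (auto simp: poly_eq_0_iff_dvd elim: dvdE)
    from \<open>poly q z = 0\<close> obtain q' where q': "q = [:-z, 1:] * q'" by (auto simp: poly_eq_0_iff_dvd elim: dvdE)
    have p'0: "p' \<noteq> 0" and q'0: "q' \<noteq> 0" using less.prems p' q' by auto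
    have nz: "[:-z, 1:] \<noteq> (0::complex poly)" by simp
    have "degree p = degree [:-z, 1:] + degree p'" unfolding p' by (rule degree_mult_eq[OF nz p'0])
    then have dlt: "degree p' < degree p" by simp
    have "\<forall>w. order w p' \<le> order w q'"
    proof
      fix w
      have pn: "[:-z, 1:] * p' \<noteq> 0" using less.prems(1) p' by blast
      have qn: "[:-z, 1:] * q' \<noteq> 0" using less.prems(2) q' by blast
      have "order w p = order w [:-z, 1:] + order w p'" unfolding p' by (rule order_mult[OF pn])
      moreover have "order w q = order w [:-z, 1:] + order w q'" unfolding q' by (rule order_mult[OF qn])
      ultimately show "order w p' \<le> order w q'" using less.prems(3) by (metis add_le_cancel_left)
    qed
    then have "p' dvd q'" using less.hyps[OF dlt p'0 q'0] by blast
    then have "[:-z, 1:] * p' dvd [:-z, 1:] * q'" by (rule mult_dvd_mono[OF dvd_refl])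
    then show ?thesis using p' q' by (simp only:)
  qed
qed

lemma real_dvd_from_complex:
  fixes p q :: "real poly"
  assumes "cr p dvd cr q"
  shows "p dvd q"
proof (cases "p = 0")
  case True
  then have "cr q = 0" using assms by simp
  then show ?thesis by (simp add: cr_eq_0)
next
  case False
  define r where "r = q mod p"
  have "q = q div p * p + r" unfolding r_def by simp
  then have "cr q = cr (q div p) * cr p + cr r" by (metis cr_add cr_mult)
  then have "cr p dvd cr r" using assms by (metis dvd_add_right_iff dvd_triv_right)
  have "r = 0"
  proof (rule ccontr)
    assume "r \<noteq> 0"
    then have "degree (cr p) \<le> degree (cr r)" using \<open>cr p dvd cr r\<close> by (intro dvd_imp_degree_le) (simp_all add: cr_eq_0)
    moreover have "degree r < degree p" using False \<open>r \<noteq> 0\<close> unfolding r_def by (rule degree_mod_less')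
    ultimately show False by (simp add: cr_degree)
  qed
  then show ?thesis unfolding r_def by (simp add: mod_eq_0_iff_dvd)
qed

definition Dp :: "nat \<Rightarrow> real poly" where "Dp N = 1 - monom 1 N"

lemma Dp_degree: "N > 0 \<Longrightarrow> degree (Dp N) = N"
proof -
  assume N: "N > 0"
  have "coeff (Dp N) N \<noteq> 0" using N by (simp add: Dp_def coeff_monom)
  then have "N \<le> degree (Dp N)" by (rule le_degree)
  moreover have "degree (Dp N) \<le> N" unfolding Dp_def
    by (rule degree_diff_le) (simp_all add: degree_monom_le)
  ultimately show ?thesis by simp
qed

lemma Dp_nz: assumes "N > 0" shows "Dp N \<noteq> 0"
proof
  assume "Dp N = 0"
  then have "degree (Dp N) = 0" by simp
  then show False using Dp_degree[OF assms] assms by simp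
qed

lemma poly_cr_Dp: "poly (cr (Dp N)) z = 1 - z ^ N"
  by (simp add: Dp_def cr_diff cr_monom poly_monom)

lemma fps_Dp: "fps_of_poly (Dp N) = 1 - fps_X ^ N"
  by (simp add: Dp_def fps_of_poly_diff fps_of_poly_monom')

lemma poles_finite:
  assumes "in_R A B" shows "finite (poles A B)"
proof -
  have "B \<noteq> 0" using assms by (auto simp: in_R_def)
  then have "cr B \<noteq> 0" by (simp add: cr_eq_0)
  then have "finite {z. poly (cr B) z = 0}" by (rule poly_roots_finite)
  moreover have "poles A B \<subseteq> {z. poly (cr B) z = 0}" unfolding poles_def by auto
  ultimately show ?thesis by (rule finite_subset[rotated])
qed

lemma exists_PM:
  assumes "in_R A B" "N > 0" "\<forall>z\<in>poles A B. z ^ N = 1"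
  shows "\<exists>M P. M \<ge> 1 \<and> A * Dp N ^ M = B * P \<and> (P = 0 \<or> degree P < N * M)"
proof (cases "A = 0")
  case True
  then show ?thesis by (intro exI[of _ 1] exI[of _ 0]) simp
next
  case A0: False
  have B0: "B \<noteq> 0" and dAB: "degree A < degree B" using assms(1) by (auto simp: in_R_def)
  define M where "M = degree B"
  have M1: "M \<ge> 1" using dAB M_def by simp
  define C where "C = A * Dp N ^ M"
  have C0: "C \<noteq> 0" using A0 Dp_nz[OF assms(2)] by (simp add: C_def)
  have cC0: "cr C \<noteq> 0" using C0 by (simp add: cr_eq_0)
  have cC: "cr C = cr A * cr (Dp N) ^ M" by (simp add: C_def cr_mult cr_power)
  have "cr B dvd cr C"
  proof (rule order_le_dvd)
    show "cr B \<noteq> 0" using B0 by (simp add: cr_eq_0)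
    show "cr C \<noteq> 0" by (rule cC0)
    show "\<forall>z. order z (cr B) \<le> order z (cr C)"
    proof
      fix z
      consider "poly (cr B) z \<noteq> 0" | "order z (cr B) \<le> order z (cr A)"
        | "poly (cr B) z = 0" "order z (cr A) < order z (cr B)" by linarith
      then show "order z (cr B) \<le> order z (cr C)"
      proof cases
        case 1 then show ?thesis by (simp add: order_0I)
      next
        case 2
        have "cr A dvd cr C" using cC by simp
        then have "order z (cr A) \<le> order z (cr C)" using cC0 by (rule dvd_imp_order_le[rotated])
        then show ?thesis using 2 by simp
      next
        case 3
        then have "z \<in> poles A B" unfolding poles_def using A0 by simp
        then have "z ^ N = 1" using assms(3) by simp
        then have "poly (cr (Dp N)) z = 0" by (simp add: poly_cr_Dp)
        then have "[:-z, 1:] dvd cr (Dp N)" by (simp add: poly_eq_0_iff_dvd)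
        then have "[:-z, 1:] ^ M dvd cr (Dp N) ^ M" by (rule dvd_power_same)
        also have "\<dots> dvd cr C" using cC by simp
        finally have "M \<le> order z (cr C)" using cC0 by (simp add: order_divides)
        moreover have "order z (cr B) \<le> M"
          using order_degree[of "cr B" z] B0 by (simp add: cr_eq_0 cr_degree M_def)
        ultimately show ?thesis by simp
      qed
    qed
  qed
  then have "B dvd C" by (rule real_dvd_from_complex)
  then obtain P where P: "C = B * P" by (elim dvdE)
  have P0: "P \<noteq> 0" using C0 P by auto
  have "degree C = degree A + N * M"
    using A0 Dp_nz[OF assms(2)] by (simp add: C_def degree_mult_eq degree_power_eq Dp_degree[OF assms(2)])
  moreover have "degree C = degree B + degree P" using P B0 P0 by (simp add: degree_mult_eq)
  ultimately have "degree P < N * M" using dAB by simp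
  then show ?thesis using M1 P unfolding C_def by blast
qed

lemma rat_fps_eq:
  assumes "poly B 0 \<noteq> 0" "N > 0" "A * Dp N ^ M = B * P"
  shows "rat_fps A B = fps_of_poly P * Ifps N ^ M"
proof -
  have B0: "fps_of_poly B $ 0 \<noteq> 0" using assms(1) by (simp add: poly_0_coeff_0)
  have eq: "fps_of_poly A * (1 - fps_X ^ N) ^ M = fps_of_poly B * fps_of_poly P"
    using arg_cong[OF assms(3), of fps_of_poly] by (simp add: fps_of_poly_mult fps_of_poly_power fps_Dp)
  have one: "(1 - fps_X ^ N) ^ M * Ifps N ^ M = 1"
    using Ifps_mult[OF assms(2)] by (simp add: power_mult_distrib[symmetric])
  have "rat_fps A B = fps_of_poly A * inverse (fps_of_poly B)"
    unfolding rat_fps_def using B0 by (simp add: fps_divide_unit)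
  also have "\<dots> = fps_of_poly A * inverse (fps_of_poly B) * ((1 - fps_X ^ N) ^ M * Ifps N ^ M)"
    by (simp add: one)
  also have "\<dots> = (fps_of_poly A * (1 - fps_X ^ N) ^ M) * inverse (fps_of_poly B) * Ifps N ^ M"
    by (simp add: algebra_simps)
  also have "\<dots> = fps_of_poly P * Ifps N ^ M * (fps_of_poly B * inverse (fps_of_poly B))"
    unfolding eq by (simp add: algebra_simps)
  also have "\<dots> = fps_of_poly P * Ifps N ^ M"
    using B0 by (simp add: inverse_mult_eq_1')
  finally show ?thesis .
qed

lemma qp_rat:
  assumes "in_R A B" "N > 0" "\<forall>z\<in>poles A B. z ^ N = 1"
  shows "qp N (rat_fps A B)"
proof -
  obtain M P where MP: "M \<ge> 1" "A * Dp N ^ M = B * P" "P = 0 \<or> degree P < N * M"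
    using exists_PM[OF assms] by blast
  have "rat_fps A B = fps_of_poly P * Ifps N ^ M"
    using assms(1,2) MP(2) by (intro rat_fps_eq) (auto simp: in_R_def)
  then show ?thesis using qp_poly[OF assms(2) MP(1,3)] by simp
qed



lemma uo_pos:
  assumes "root_of_unity z" shows "unity_order z > 0 \<and> z ^ unity_order z = 1"
  using assms unfolding root_of_unity_def unity_order_def by (rule LeastI_ex)

lemma uo_dvd:
  assumes "n > 0" "z ^ n = 1" shows "unity_order z dvd n"
proof -
  define d where "d = unity_order z"
  have r: "root_of_unity z" using assms unfolding root_of_unity_def by blast
  have d: "d > 0" "z ^ d = 1" using uo_pos[OF r] by (simp_all add: d_def)
  have "z ^ n = z ^ (d * (n div d) + n mod d)" by simp
  also have "\<dots> = z ^ (n mod d)" by (simp only: power_add power_mult d(2) power_one mult.left_neutral)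
  finally have zm: "z ^ (n mod d) = 1" using assms by simp
  show ?thesis
  proof (rule ccontr)
    assume "\<not> unity_order z dvd n"
    then have "n mod d > 0" unfolding d_def by (metis dvd_eq_mod_eq_0 gr0I)
    moreover have "n mod d < d" using d by simp
    then have "\<not> (n mod d > 0 \<and> z ^ (n mod d) = 1)"
      unfolding d_def unity_order_def by (rule not_less_Least)
    then show False using zm \<open>n mod d > 0\<close> by simp
  qed
qed

lemma level_facts:
  assumes "finite (poles A B)" "\<forall>z\<in>poles A B. root_of_unity z"
  shows "level A B > 0" "\<And>z. z \<in> poles A B \<Longrightarrow> z ^ level A B = 1"
proof -
  have "0 \<notin> unity_order ` poles A B" using assms(2) uo_pos by fastforce
  moreover have "finite (unity_order ` poles A B)" using assms(1) by simp
  ultimately have "Lcm (unity_order ` poles A B) \<noteq> 0" by (simp add: Lcm_0_iff)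
  then show "level A B > 0" unfolding level_def by simp
next
  fix z assume z: "z \<in> poles A B"
  have "unity_order z dvd level A B" unfolding level_def using z by (simp add: dvd_Lcm)
  then obtain t where t: "level A B = unity_order z * t" by (elim dvdE)
  have "z ^ unity_order z = 1" using uo_pos assms(2) z by blast
  then show "z ^ level A B = 1" by (simp add: t power_mult)
qed

lemma level_dvd:
  assumes "N > 0" "\<forall>z\<in>poles A B. z ^ N = 1" shows "level A B dvd N"
  unfolding level_def using assms uo_dvd by (intro Lcm_least) auto

lemma qp_coeff:
  assumes "qp N F" "j0 < N"
  shows "\<exists>q. \<forall>n. n mod N = j0 \<longrightarrow> F $ n = poly q (real n)"
proof -
  obtain K c where F: "F = (\<Sum>k<K. \<Sum>j<N. fps_const (c k j) * basis_fn N k j)"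
    using assms(1) unfolding qp_def by blast
  define q where "q = (\<Sum>k<K. monom (c k j0) k)"
  have "F $ n = poly q (real n)" if n: "n mod N = j0" for n
  proof -
    have "F $ n = (\<Sum>k<K. \<Sum>j<N. c k j * basis_fn N k j $ n)"
      unfolding F by (simp add: fps_sum_nth)
    also have "\<dots> = (\<Sum>k<K. c k j0 * real n ^ k)"
    proof (intro sum.cong refl)
      fix k
      have "(\<Sum>j<N. c k j * basis_fn N k j $ n) = (\<Sum>j<N. if j = j0 then c k j0 * real n ^ k else 0)"
        by (intro sum.cong refl) (auto simp: basis_coeff n)
      also have "\<dots> = c k j0 * real n ^ k" using assms(2) by (subst sum.delta) auto
      finally show "(\<Sum>j<N. c k j * basis_fn N k j $ n) = c k j0 * real n ^ k" .
    qed
    also have "\<dots> = poly q (real n)" unfolding q_def by (simp add: poly_sum poly_monom)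
    finally show ?thesis .
  qed
  then show ?thesis by blast
qed

lemma aux_comb:
  assumes h: "I1 = D * I2" shows "(T :: 'a :: comm_ring) * I1 + Pf * (c * XN * I2) = (T * D + c * XN * Pf) * I2"
  unfolding h by (simp add: algebra_simps)

lemma degree_pCons_pderiv: "degree (pCons 0 (pderiv P)) \<le> degree (P :: real poly)"
proof (cases "pderiv P = 0")
  case True then show ?thesis by simp
next
  case False
  then have "degree P \<noteq> 0" by (metis pderiv_eq_0_iff)
  then show ?thesis using False by (simp add: degree_pderiv)
qed

lemma basis_rep:
  assumes "N > 0" "j < N"
  shows "\<exists>P. degree P < N * (k + 1) \<and> basis_fn N k j = fps_of_poly P * Ifps N ^ (k + 1)"
proof (induction k)
  case 0
  show ?case using assms base_XI[OF assms(2)]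
    by (intro exI[of _ "monom 1 j"]) (simp add: fps_of_poly_monom' degree_monom_eq)
next
  case (Suc k)
  then obtain P where P: "degree P < N * (k + 1)" "basis_fn N k j = fps_of_poly P * Ifps N ^ (k + 1)"
    by blast
  define m where "m = k + 1"
  define P' where "P' = pCons 0 (pderiv P) * Dp N + smult (real m * real N) (monom 1 N * P)"
  have Im: "Ifps N ^ m = fps_of_poly (Dp N) * Ifps N ^ (m + 1)"
  proof -
    have "Ifps N ^ m = Ifps N ^ m * ((1 - fps_X ^ N) * Ifps N)" using Ifps_mult[OF assms(1)] by simp
    also have "\<dots> = (1 - fps_X ^ N) * (Ifps N ^ m * Ifps N)" by (simp only: mult_ac)
    also have "Ifps N ^ m * Ifps N = Ifps N ^ (m + 1)" by (simp only: power_add power_one_right)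
    finally show ?thesis by (simp only: fps_Dp)
  qed
  have tP: "theta (fps_of_poly P) = fps_of_poly (pCons 0 (pderiv P))"
    by (simp add: theta_def fps_of_poly_pCons fps_of_poly_pderiv mult.commute)
  have "basis_fn N (Suc k) j = theta (fps_of_poly P * Ifps N ^ m)"
    using P(2) by (simp add: basis_fn_def m_def)
  also have "\<dots> = fps_of_poly (pCons 0 (pderiv P)) * Ifps N ^ m
      + fps_of_poly P * (fps_const (real m * real N) * fps_X ^ N * Ifps N ^ (m + 1))"
    by (simp only: theta_mult tP theta_Ipow[OF assms(1)])
  also have "\<dots> = (fps_of_poly (pCons 0 (pderiv P)) * fps_of_poly (Dp N)
      + fps_const (real m * real N) * fps_X ^ N * fps_of_poly P) * Ifps N ^ (m + 1)"
    by (rule aux_comb[OF Im])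
  also have "\<dots> = fps_of_poly P' * Ifps N ^ (Suc k + 1)"
    unfolding P'_def m_def
    by (simp only: fps_of_poly_add fps_of_poly_mult fps_of_poly_smult fps_of_poly_monom' mult.assoc Suc_eq_plus1)
  finally have eq: "basis_fn N (Suc k) j = fps_of_poly P' * Ifps N ^ (Suc k + 1)" .
  have d1: "degree (pCons 0 (pderiv P) * Dp N) < N * (Suc k + 1)"
  proof -
    have "degree (pCons 0 (pderiv P) * Dp N) \<le> degree (pCons 0 (pderiv P)) + degree (Dp N)"
      by (rule degree_mult_le)
    also have "\<dots> \<le> degree P + N" using degree_pCons_pderiv[of P] Dp_degree[OF assms(1)] by simp
    finally show ?thesis using P(1) by simp
  qed
  have d2: "degree (smult (real m * real N) (monom 1 N * P)) < N * (Suc k + 1)"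
  proof -
    have "degree (smult (real m * real N) (monom 1 N * P)) \<le> degree (monom (1::real) N * P)"
      by (rule degree_smult_le)
    also have "\<dots> \<le> degree (monom (1::real) N) + degree P" by (rule degree_mult_le)
    also have "\<dots> \<le> N + degree P" by (simp add: degree_monom_le)
    finally show ?thesis using P(1) by simp
  qed
  have "degree P' < N * (Suc k + 1)"
    unfolding P'_def by (rule degree_add_less[OF d1 d2])
  then show ?case using eq by blast
qed



lemma poly_zero_inf:
  fixes p :: "real poly" and f :: "nat \<Rightarrow> real"
  assumes "inj f" "\<forall>t. poly p (f t) = 0" shows "p = 0"
proof (rule ccontr)
  assume "p \<noteq> 0"
  then have "finite {x. poly p x = 0}" by (rule poly_roots_finite)
  moreover have "range f \<subseteq> {x. poly p x = 0}" using assms(2) by auto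
  ultimately have "finite (range f)" by (rule finite_subset[rotated])
  have "finite (UNIV :: nat set)" by (rule finite_imageD[OF \<open>finite (range f)\<close> assms(1)])
  then show False by simp
qed

lemma mod_ne:
  fixes j N L' :: nat
  assumes "j < N" "0 < L'" "L' < N" shows "(j + L') mod N \<noteq> j"
proof (cases "j + L' < N")
  case True
  then have "(j + L') mod N = j + L'" by simp
  then show ?thesis using assms by simp
next
  case False
  then have "(j + L') mod N = (j + L' - N) mod N" by (simp add: le_mod_geq)
  also have "\<dots> = j + L' - N" using assms by simp
  finally show ?thesis using assms False by simp
qed

lemma basis_level:
  assumes N: "N > 0" and jN: "j < N"
  shows "\<exists>A' B'. in_R A' B' \<and> rat_fps A' B' = basis_fn N k j \<and>
           (\<forall>z\<in>poles A' B'. root_of_unity z) \<and> level A' B' = N"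
proof -
  obtain P where P: "degree P < N * (k + 1)" "basis_fn N k j = fps_of_poly P * Ifps N ^ (k + 1)"
    using basis_rep[OF N jN] by blast
  define B' where "B' = Dp N ^ (k + 1)"
  have pD0: "poly (Dp N) 0 = 1" using N by (simp add: Dp_def poly_monom)
  have pB0: "poly B' 0 \<noteq> 0" unfolding B'_def by (simp add: poly_power pD0)
  have dB: "degree B' = N * (k + 1)" unfolding B'_def
    by (simp only: degree_power_eq[OF Dp_nz[OF N]] Dp_degree[OF N] mult.commute)
  have inR: "in_R P B'" unfolding in_R_def using pB0 dB P(1) by simp
  have "rat_fps P B' = fps_of_poly P * Ifps N ^ (k + 1)"
    by (rule rat_fps_eq[OF pB0 N]) (simp add: B'_def mult.commute)
  then have rat: "rat_fps P B' = basis_fn N k j" using P(2) by simp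
  have pol: "\<forall>z\<in>poles P B'. z ^ N = 1"
  proof
    fix z assume "z \<in> poles P B'"
    then have "poly (cr B') z = 0" unfolding poles_def by simp
    then have "(1 - z ^ N) ^ (k + 1) = 0" unfolding B'_def cr_power by (simp add: poly_power poly_cr_Dp)
    then show "z ^ N = 1" by auto
  qed
  have root: "\<forall>z\<in>poles P B'. root_of_unity z"
    using pol N unfolding root_of_unity_def by blast
  have fin: "finite (poles P B')" by (rule poles_finite[OF inR])
  define L' where "L' = level P B'"
  have L'dvd: "L' dvd N" unfolding L'_def by (rule level_dvd[OF N pol])
  have L'pos: "L' > 0" unfolding L'_def by (rule level_facts(1)[OF fin root])
  have L'pow: "\<forall>z\<in>poles P B'. z ^ L' = 1" unfolding L'_def using level_facts(2)[OF fin root] by blast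
  have qpL: "qp L' (basis_fn N k j)" using qp_rat[OF inR L'pos L'pow] rat by simp
  have "L' = N"
  proof (rule ccontr)
    assume ne: "L' \<noteq> N"
    have "L' \<le> N" using L'dvd N by (rule dvd_imp_le)
    with ne have L'N: "L' < N" by simp
    define j0 where "j0 = j mod L'"
    have j0: "j0 < L'" using L'pos by (simp add: j0_def)
    obtain q where q: "\<And>n. n mod L' = j0 \<Longrightarrow> basis_fn N k j $ n = poly q (real n)"
      using qp_coeff[OF qpL j0] by blast
    have h1: "poly (q - monom 1 k) (real (j + L' * (N * t))) = 0" for t
    proof -
      let ?n = "j + L' * (N * t)"
      have m1: "?n mod L' = j0" by (simp add: j0_def)
      have e: "?n = j + N * (L' * t)" by (simp add: mult.left_commute)
      have "?n mod N = (j + N * (L' * t)) mod N" by (simp only: e)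
      also have "\<dots> = j mod N" by (rule mod_mult_self2)
      also have "\<dots> = j" using jN by simp
      finally have m2: "?n mod N = j" .
      have "poly q (real ?n) = real ?n ^ k" using q[OF m1] basis_coeff[OF jN, of k ?n] m2 by simp
      then show ?thesis by (simp add: poly_monom)
    qed
    have h2: "poly q (real (j + L' + L' * (N * t))) = 0" for t
    proof -
      let ?n = "j + L' + L' * (N * t)"
      have m1: "?n mod L' = j0" by (simp add: j0_def)
      have e: "?n = (j + L') + N * (L' * t)" by (simp add: mult.left_commute)
      have "?n mod N = ((j + L') + N * (L' * t)) mod N" by (simp only: e)
      also have "\<dots> = (j + L') mod N" by (rule mod_mult_self2)
      finally have "?n mod N = (j + L') mod N" .
      then have m2: "?n mod N \<noteq> j" using mod_ne[OF jN L'pos L'N] by simp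
      show ?thesis using q[OF m1] basis_coeff[OF jN, of k ?n] m2 by simp
    qed
    have inj1: "inj (\<lambda>t. real (j + L' * (N * t)))"
      using L'pos N by (intro injI) simp
    have inj2: "inj (\<lambda>t. real (j + L' + L' * (N * t)))"
      using L'pos N by (intro injI) simp
    have "q - monom 1 k = 0" using poly_zero_inf[OF inj1] h1 by blast
    moreover have "q = 0" using poly_zero_inf[OF inj2] h2 by blast
    ultimately show False by simp
  qed
  then show ?thesis using inR rat root unfolding L'_def by blast
qed

theorem mainTheorem8:
  fixes A B :: "real poly" and L :: nat
  assumes "in_R A B"
    and "\<forall>z\<in>poles A B. root_of_unity z"
    and "L = level A B"
  shows "(\<exists>K (c :: nat \<Rightarrow> nat \<Rightarrow> real).
            rat_fps A B = (\<Sum>k<K. \<Sum>j<L. fps_const (c k j) * basis_fn L k j))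
       \<and> (\<forall>k j. j < L \<longrightarrow>
            basis_fn L k j \<noteq> 0 \<and>
            (\<exists>e::real. U_op (L + 1) (basis_fn L k j) = fps_const e * basis_fn L k j) \<and>
            (\<exists>A' B'. in_R A' B' \<and> rat_fps A' B' = basis_fn L k j \<and>
                     (\<forall>z\<in>poles A' B'. root_of_unity z) \<and> level A' B' = L))"
proof -
  have fin: "finite (poles A B)" by (rule poles_finite[OF assms(1)])
  have Lpos: "L > 0" unfolding assms(3) by (rule level_facts(1)[OF fin assms(2)])
  have Lpow: "\<forall>z\<in>poles A B. z ^ L = 1" unfolding assms(3) using level_facts(2)[OF fin assms(2)] by blast
  have part1: "qp L (rat_fps A B)" by (rule qp_rat[OF assms(1) Lpos Lpow])
  have part2: "basis_fn L k j \<noteq> 0 \<and>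
            (\<exists>e::real. U_op (L + 1) (basis_fn L k j) = fps_const e * basis_fn L k j) \<and>
            (\<exists>A' B'. in_R A' B' \<and> rat_fps A' B' = basis_fn L k j \<and>
                     (\<forall>z\<in>poles A' B'. root_of_unity z) \<and> level A' B' = L)" if jL: "j < L" for k j
  proof (intro conjI)
    have "(j + L) mod L = j" using jL by simp
    then have "basis_fn L k j $ (j + L) = real (j + L) ^ k" by (simp add: basis_coeff[OF jL])
    moreover have "real (j + L) ^ k \<noteq> 0" using Lpos by simp
    ultimately show "basis_fn L k j \<noteq> 0" by auto
  next
    have "U_op (L + 1) (basis_fn L k j) = fps_const (real (L + 1) ^ k) * basis_fn L k j"
    proof (rule fps_ext)
      fix n
      have m: "((L + 1) * n) mod L = n mod L"
        by (simp add: distrib_right)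
      have "U_op (L + 1) (basis_fn L k j) $ n = basis_fn L k j $ ((L + 1) * n)"
        by (simp add: U_op_def)
      also have "\<dots> = (if ((L + 1) * n) mod L = j then real ((L + 1) * n) ^ k else 0)"
        by (rule basis_coeff[OF jL])
      also have "\<dots> = (if n mod L = j then real (L + 1) ^ k * real n ^ k else 0)"
        by (simp only: m of_nat_mult power_mult_distrib)
      also have "\<dots> = (fps_const (real (L + 1) ^ k) * basis_fn L k j) $ n"
        by (simp only: fps_mult_left_const_nth basis_coeff[OF jL]) simp
      finally show "U_op (L + 1) (basis_fn L k j) $ n = (fps_const (real (L + 1) ^ k) * basis_fn L k j) $ n" .
    qed
    then show "\<exists>e::real. U_op (L + 1) (basis_fn L k j) = fps_const e * basis_fn L k j" by blast
  next
    show "\<exists>A' B'. in_R A' B' \<and> rat_fps A' B' = basis_fn L k j \<and>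
                     (\<forall>z\<in>poles A' B'. root_of_unity z) \<and> level A' B' = L"
      by (rule basis_level[OF Lpos jL])
  qed
  show ?thesis using part1 part2 unfolding qp_def by blast
qed

end
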